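(* Let $n\ge 1$ and let $\mathcal{H}=(\mathbb{C}^3)^{\otimes n}$ with the sector projectors $\Pi_{\bm i}$ and trace-normalized projectors $\widetilde{\Pi}_{\bm i}$, $\bm i\in\{c,l\}^n$, as in the context. Define the twirling projector $\bar{\mathcal{P}}$ on linear operators $\rho$ on $\mathcal{H}$ by $\bar{\mathcal{P}}(\rho)=\sum_{\bm i\in\{c,l\}^n}\operatorname{tr}(\Pi_{\bm i}\rho)\,\widetilde{\Pi}_{\bm i}$. Then $$\bar{\mathcal{P}}=\frac{1}{|\mathbb{P}_n|}\sum_{P\in\mathbb{P}_n}\mathcal{P},$$ i.e. for every quantum state $\rho$ on $\mathcal{H}$, $\frac{1}{|\mathbb{P}_n|}\sum_{P\in\mathbb{P}_n}\mathcal{P}(\rho)=\sum_{\bm i}\operatorname{tr}(\Pi_{\bm i}\rho)\widetilde{\Pi}_{\bm i}$.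
   Context: A single qubit with leakage is the Hilbert space $\mathbb{C}^3$ with orthonormal basis $\{|0\rangle,|1\rangle,|2\rangle\}$; its computational subspace is $\operatorname{span}\{|0\rangle,|1\rangle\}$ with projector $\Pi_c=|0\rangle\langle 0|+|1\rangle\langle 1|$ and its leakage subspace is $\operatorname{span}\{|2\rangle\}$ with projector $\Pi_l=|2\rangle\langle 2|$. For $n$ qubits, $\mathcal{H}=(\mathbb{C}^3)^{\otimes n}$ and for $\bm i=(i_1,\dots,i_n)\in\{c,l\}^n$, $\Pi_{\bm i}=\bigotimes_{k=1}^n\Pi_{i_k}$ (the factor on qubit $k$ is $\Pi_c$ if $i_k=c$ and $\Pi_l$ if $i_k=l$), $\mathcal{H}_{\bm i}$ is its range, and $\widetilde{\Pi}_{\bm i}=\Pi_{\bm i}/\dim(\mathcal{H}_{\bm i})$. The single-qubit Pauli group is $\mathbb{P}=\{\pm1,\pm \mathrm{i}\}\times\{I,X,Y,Z\}$ (16 elements, $X,Y,Z$ the $2\times2$ Pauli matrices) and $\mathbb{P}_n=\mathbb{P}^{\times n}$. For $U\in\mathbb{P}$, its channel on $\mathbb{C}^3$ is $\mathcal{P}_U(\rho)=(U\oplus 1)\rho(U\oplus 1)^\dagger$, where $U\oplus 1$ acts as $U$ on $\operatorname{span}\{|0\rangle,|1\rangle\}$ and as the identity on $|2\rangle$. For $P=(P_1,\dots,P_n)\in\mathbb{P}_n$, $\mathcal{P}=\bigotimes_{k}\mathcal{P}_{P_k}$. *)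

theory Defs
  imports Complex_Main
begin

text \<open>Operators on the n-qutrit space (C^3)^{\<otimes>n} are represented by their matrices
in the computational product basis, indexed by lists xs of length n with entries in {0,1,2}.
A single-site operator is a function nat \<Rightarrow> nat \<Rightarrow> complex (3x3 matrix, indices 0,1,2).\<close>

type_synonym op1 = "nat \<Rightarrow> nat \<Rightarrow> complex"
type_synonym opn = "nat list \<Rightarrow> nat list \<Rightarrow> complex"

definition basis :: "nat \<Rightarrow> nat list set" where
  "basis n = {xs. length xs = n \<and> set xs \<subseteq> {0,1,2}}"

definition tensor :: "op1 list \<Rightarrow> opn" where
  "tensor As xs ys = (\<Prod>k<length As. (As ! k) (xs ! k) (ys ! k))"

definition mtrace :: "nat \<Rightarrow> opn \<Rightarrow> complex" where
  "mtrace n A = (\<Sum>x\<in>basis n. A x x)"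

definition mmult :: "nat \<Rightarrow> opn \<Rightarrow> opn \<Rightarrow> opn" where
  "mmult n A B x y = (\<Sum>z\<in>basis n. A x z * B z y)"

definition adjoint :: "opn \<Rightarrow> opn" where
  "adjoint A x y = cnj (A y x)"

datatype pauli = PI | PX | PY | PZ

fun pauli_mat :: "pauli \<Rightarrow> op1" where
  "pauli_mat PI i j = (if i = j then 1 else 0)"
| "pauli_mat PX i j = (if i \<noteq> j then 1 else 0)"
| "pauli_mat PY i j = (if i = 0 \<and> j = 1 then - \<i> else if i = 1 \<and> j = 0 then \<i> else 0)"
| "pauli_mat PZ i j = (if i = 0 \<and> j = 0 then 1 else if i = 1 \<and> j = 1 then -1 else 0)"

definition pauli_group :: "(complex \<times> pauli) set" where
  "pauli_group = {1, -1, \<i>, -\<i>} \<times> UNIV"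

definition pauli_group_n :: "nat \<Rightarrow> (complex \<times> pauli) list set" where
  "pauli_group_n n = {Ps. length Ps = n \<and> set Ps \<subseteq> pauli_group}"

definition lift :: "complex \<times> pauli \<Rightarrow> op1" where
  "lift U i j = (if i < 2 \<and> j < 2 then fst U * pauli_mat (snd U) i j
                 else if i = 2 \<and> j = 2 then 1 else 0)"

definition pauli_channel :: "nat \<Rightarrow> (complex \<times> pauli) list \<Rightarrow> opn \<Rightarrow> opn" where
  "pauli_channel n Ps \<rho> =
     (let W = tensor (map lift Ps) in mmult n (mmult n W \<rho>) (adjoint W))"

text \<open>Sector projectors; a sector label is a bool list, True = leakage (l), False = computational (c).\<close>
definition proj_c :: op1 where
  "proj_c i j = (if i = j \<and> i < 2 then 1 else 0)"

definition proj_l :: op1 where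
  "proj_l i j = (if i = 2 \<and> j = 2 then 1 else 0)"

definition sector_proj :: "bool list \<Rightarrow> opn" where
  "sector_proj s = tensor (map (\<lambda>b. if b then proj_l else proj_c) s)"

definition sectors :: "nat \<Rightarrow> bool list set" where
  "sectors n = {s. length s = n}"

definition sector_dim :: "nat \<Rightarrow> bool list \<Rightarrow> nat" where
  "sector_dim n s = card {x \<in> basis n. sector_proj s x x = 1}"

definition normalized_sector_proj :: "nat \<Rightarrow> bool list \<Rightarrow> opn" where
  "normalized_sector_proj n s x y = sector_proj s x y / of_nat (sector_dim n s)"

definition twirl_proj :: "nat \<Rightarrow> opn \<Rightarrow> opn" where
  "twirl_proj n \<rho> x y =
     (\<Sum>s\<in>sectors n. mtrace n (mmult n (sector_proj s) \<rho>) * normalized_sector_proj n s x y)"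

end

theory Submission
  imports Defs
begin

lemma sum_lists_prod:
  fixes f :: "nat \<Rightarrow> 'a \<Rightarrow> 'b::comm_semiring_1"
  assumes A: "finite A"
  shows "(\<Sum>xs\<in>{xs. length xs = n \<and> set xs \<subseteq> A}. \<Prod>k<n. f k (xs!k)) = (\<Prod>k<n. \<Sum>a\<in>A. f k a)"
proof (induction n arbitrary: f)
  case 0
  have "{xs. length xs = 0 \<and> set xs \<subseteq> A} = {[]}" by auto
  then show ?case by simp
next
  case (Suc n)
  let ?L = "{xs. length xs = n \<and> set xs \<subseteq> A}"
  have eq: "{xs. length xs = Suc n \<and> set xs \<subseteq> A} = (\<lambda>(a,xs). a#xs) ` (A \<times> ?L)"
    by (auto simp: length_Suc_conv image_iff)
  have inj: "inj_on (\<lambda>(a,xs). a#xs) (A \<times> ?L)" by (auto simp: inj_on_def)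
  have "(\<Sum>xs\<in>{xs. length xs = Suc n \<and> set xs \<subseteq> A}. \<Prod>k<Suc n. f k (xs!k))
      = (\<Sum>(a,xs)\<in>A \<times> ?L. f 0 a * (\<Prod>k<n. f (Suc k) (xs!k)))"
    unfolding eq by (subst sum.reindex[OF inj]) (simp only: prod.lessThan_Suc_shift, simp add: case_prod_beta)
  also have "\<dots> = (\<Sum>a\<in>A. f 0 a * (\<Sum>xs\<in>?L. \<Prod>k<n. f (Suc k) (xs!k)))"
    by (simp add: sum.cartesian_product[symmetric] sum_distrib_left)
  also have "\<dots> = (\<Sum>a\<in>A. f 0 a) * (\<Prod>k<n. \<Sum>a\<in>A. f (Suc k) a)"
    by (simp add: Suc.IH[of "\<lambda>k. f (Suc k)"] sum_distrib_right)
  also have "\<dots> = (\<Prod>k<Suc n. \<Sum>a\<in>A. f k a)" by (rule prod.lessThan_Suc_shift[symmetric])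
  finally show ?case .
qed

lemma prod_if0:
  "(\<Prod>k<(n::nat). if P k then f k else 0) = (if \<forall>k<n. P k then \<Prod>k<n. f k else (0::'a::comm_semiring_1))"
proof (cases "\<forall>k<n. P k")
  case False
  then obtain k where "k < n" "\<not> P k" by auto
  have "(\<Prod>k<(n::nat). if P k then f k else 0) = 0"
    by (rule prod_zero) (use \<open>k < n\<close> \<open>\<not> P k\<close> in auto)
  then show ?thesis using False by auto
qed auto

lemma univ_pauli: "(UNIV :: pauli set) = {PI, PX, PY, PZ}"
  using pauli.exhaust by auto

lemma sum_prod_set: "(\<Sum>P\<in>A \<times> B. h P) = (\<Sum>u\<in>A. \<Sum>p\<in>B. h (u,p))"
  by (simp add: sum.cartesian_product)

definition sw :: "nat \<Rightarrow> nat \<Rightarrow> nat \<Rightarrow> nat \<Rightarrow> complex" where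
  "sw a b c d = (if a = c \<and> b = d \<and> (a < 2 \<longleftrightarrow> b < 2) then (if a < 2 then 1/2 else 1) else 0)"

lemma site:
  assumes "a \<in> {0,1,2}" "b \<in> {0,1,2}" "c \<in> {0,1,2}" "d \<in> {0,1,2}"
  shows "(\<Sum>P\<in>pauli_group. lift P a b * cnj (lift P c d)) = 16 * sw a b c d"
proof -
  let ?U = "{1, -1, \<i>, -\<i>} :: complex set"
  have U4: "(\<Sum>u\<in>?U. g u) = g 1 + g (-1) + g \<i> + g (-\<i>)" for g :: "complex \<Rightarrow> complex"
    by (simp add: complex_eq_iff)
  have "(\<Sum>P\<in>pauli_group. lift P a b * cnj (lift P c d))
     = (\<Sum>u\<in>?U. \<Sum>p\<in>{PI,PX,PY,PZ}. lift (u,p) a b * cnj (lift (u,p) c d))"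
    unfolding pauli_group_def univ_pauli by (rule sum_prod_set)
  also have "\<dots> = (\<Sum>p\<in>{PI,PX,PY,PZ}. \<Sum>u\<in>?U. lift (u,p) a b * cnj (lift (u,p) c d))"
    by (rule sum.swap)
  also have "\<dots> = 16 * sw a b c d"
  proof (cases "a < 2 \<and> b < 2")
    case ab: True
    show ?thesis
    proof (cases "c < 2 \<and> d < 2")
      case True
      have "(\<Sum>u\<in>?U. lift (u,p) a b * cnj (lift (u,p) c d)) = 4 * (pauli_mat p a b * cnj (pauli_mat p c d))" for p
        using ab True by (simp add: U4 lift_def algebra_simps)
      then show ?thesis using ab True assms
        by (simp add: sw_def)
    next
      case False
      have "(\<Sum>u\<in>?U. lift (u,p) a b * cnj (lift (u,p) c d)) = 0" for p
        using ab False by (auto simp add: U4 lift_def algebra_simps)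
      then show ?thesis using ab False by (auto simp add: sw_def)
    qed
  next
    case ab: False
    show ?thesis
    proof (cases "a = 2 \<and> b = 2")
      case True
      show ?thesis
      proof (cases "c < 2 \<and> d < 2")
        case cd: True
        have "(\<Sum>u\<in>?U. lift (u,p) a b * cnj (lift (u,p) c d)) = 0" for p
          using True cd by (simp add: U4 lift_def algebra_simps)
        then show ?thesis using True cd by (simp add: sw_def)
      next
        case cd: False
        have "(\<Sum>u\<in>?U. lift (u,p) a b * cnj (lift (u,p) c d)) = (if c = 2 \<and> d = 2 then 4 else 0)" for p
          using True cd by (auto simp add: U4 lift_def)
        then show ?thesis using True cd assms by (auto simp add: sw_def)
      qed
    next
      case False
      have "(\<Sum>u\<in>?U. lift (u,p) a b * cnj (lift (u,p) c d)) = 0" for p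
        using ab False by (auto simp add: U4 lift_def)
      then show ?thesis using ab False assms by (auto simp add: sw_def)
    qed
  qed
  finally show ?thesis .
qed


definition sec :: "nat list \<Rightarrow> bool list" where "sec z = map (\<lambda>a. \<not> a < 2) z"

lemma basis_nth: "z \<in> basis n \<Longrightarrow> k < n \<Longrightarrow> z ! k \<in> {0,1,2}"
  unfolding basis_def by (auto dest!: nth_mem)

lemma basis_len: "z \<in> basis n \<Longrightarrow> length z = n"
  unfolding basis_def by auto

lemma finite_basis: "finite (basis n)"
proof -
  have "basis n = {xs. set xs \<subseteq> {0,1,2} \<and> length xs = n}" unfolding basis_def by auto
  then show ?thesis using finite_lists_length_eq[of "{0,1,2::nat}" n] by simp
qed

lemma card_pg: "card (pauli_group_n n) = 16 ^ n"
proof -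
  have "pauli_group_n n = {xs. set xs \<subseteq> pauli_group \<and> length xs = n}" unfolding pauli_group_n_def by auto
  moreover have "card pauli_group = 16"
    by (simp add: pauli_group_def card_cartesian_product univ_pauli complex_eq_iff)
  moreover have "finite pauli_group" by (simp add: pauli_group_def univ_pauli)
  ultimately show ?thesis using card_lists_length_eq[of pauli_group n]
    by simp
qed

lemma channel_expand:
  assumes "Ps \<in> pauli_group_n n"
  shows "pauli_channel n Ps \<rho> x y = (\<Sum>z\<in>basis n. \<Sum>w\<in>basis n. \<rho> z w *
     (\<Prod>k<n. lift (Ps!k) (x!k) (z!k) * cnj (lift (Ps!k) (y!k) (w!k))))"
proof -
  have len: "length Ps = n" using assms unfolding pauli_group_n_def by auto
  let ?W = "tensor (map lift Ps)"
  have W: "?W a b = (\<Prod>k<n. lift (Ps!k) (a!k) (b!k))" for a b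
    unfolding tensor_def using len by simp
  have "pauli_channel n Ps \<rho> x y = (\<Sum>w\<in>basis n. (\<Sum>z\<in>basis n. ?W x z * \<rho> z w) * cnj (?W y w))"
    unfolding pauli_channel_def Let_def mmult_def adjoint_def by simp
  also have "\<dots> = (\<Sum>w\<in>basis n. \<Sum>z\<in>basis n. ?W x z * \<rho> z w * cnj (?W y w))"
    by (simp add: sum_distrib_right)
  also have "\<dots> = (\<Sum>z\<in>basis n. \<Sum>w\<in>basis n. ?W x z * \<rho> z w * cnj (?W y w))"
    by (rule sum.swap)
  also have "\<dots> = (\<Sum>z\<in>basis n. \<Sum>w\<in>basis n. \<rho> z w *
     (\<Prod>k<n. lift (Ps!k) (x!k) (z!k) * cnj (lift (Ps!k) (y!k) (w!k))))"
    unfolding W by (simp add: prod.distrib mult_ac)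
  finally show ?thesis .
qed

lemma prod_sw:
  assumes "x \<in> basis n" "y \<in> basis n" "z \<in> basis n" "w \<in> basis n"
  shows "(\<Prod>k<n. sw (x!k) (z!k) (y!k) (w!k)) =
    (if x = y \<and> z = w \<and> sec x = sec z then (\<Prod>k<n. if x!k < 2 then 1/2 else 1) else 0)"
proof -
  have "(\<Prod>k<n. sw (x!k) (z!k) (y!k) (w!k)) =
     (\<Prod>k<n. if x!k = y!k \<and> z!k = w!k \<and> (x!k < 2 \<longleftrightarrow> z!k < 2) then (if x!k < 2 then 1/2 else 1) else 0)"
    unfolding sw_def by simp
  also have "\<dots> = (if \<forall>k<n. x!k = y!k \<and> z!k = w!k \<and> (x!k < 2 \<longleftrightarrow> z!k < 2)
       then (\<Prod>k<n. if x!k < 2 then 1/2 else 1) else 0)"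
    by (rule prod_if0)
  also have "(\<forall>k<n. x!k = y!k \<and> z!k = w!k \<and> (x!k < 2 \<longleftrightarrow> z!k < 2)) \<longleftrightarrow> x = y \<and> z = w \<and> sec x = sec z"
    using basis_len[OF assms(1)] basis_len[OF assms(2)] basis_len[OF assms(3)] basis_len[OF assms(4)]
    by (auto simp: list_eq_iff_nth_eq sec_def)
  finally show ?thesis .
qed

lemma sp:
  assumes "s \<in> sectors n" "z \<in> basis n" "u \<in> basis n"
  shows "sector_proj s z u = (if z = u \<and> s = sec z then 1 else 0)"
proof -
  have ls: "length s = n" using assms(1) by (simp add: sectors_def)
  have "sector_proj s z u = (\<Prod>k<n. if z!k = u!k \<and> (s!k \<longleftrightarrow> \<not> z!k < 2) then 1 else 0)"
    unfolding sector_proj_def tensor_def using ls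
  proof (simp, intro prod.cong refl)
    fix k assume "k \<in> {..<n}"
    then have "z!k \<in> {0,1,2}" "u!k \<in> {0,1,2}" using basis_nth[OF assms(2)] basis_nth[OF assms(3)] by auto
    then show "(if s ! k then proj_l else proj_c) (z ! k) (u ! k) =
      (if z ! k = u ! k \<and> s ! k = (\<not> z ! k < 2) then 1 else 0)"
      by (auto simp: proj_l_def proj_c_def)
  qed
  also have "\<dots> = (if \<forall>k<n. z!k = u!k \<and> (s!k \<longleftrightarrow> \<not> z!k < 2) then 1 else 0)"
    by (subst prod_if0) simp
  also have "(\<forall>k<n. z!k = u!k \<and> (s!k \<longleftrightarrow> \<not> z!k < 2)) \<longleftrightarrow> z = u \<and> s = sec z"
    using basis_len[OF assms(2)] basis_len[OF assms(3)] ls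
    by (auto simp: list_eq_iff_nth_eq sec_def)
  finally show ?thesis .
qed


lemma finite_sectors: "finite (sectors n)"
proof -
  have "sectors n = {xs. set xs \<subseteq> (UNIV::bool set) \<and> length xs = n}" unfolding sectors_def by auto
  then show ?thesis using finite_lists_length_eq[of "UNIV::bool set" n] by simp
qed

lemma sec_sectors: "x \<in> basis n \<Longrightarrow> sec x \<in> sectors n"
  by (simp add: sectors_def sec_def basis_len)

lemma dimG:
  assumes x: "x \<in> basis n"
  shows "of_nat (sector_dim n (sec x)) * (\<Prod>k<n. if x!k < 2 then 1/2 else 1) = (1::complex)"
proof -
  have "{z \<in> basis n. sector_proj (sec x) z z = 1} = {z \<in> basis n. sec x = sec z}"
    using sp[OF sec_sectors[OF x]] by (auto split: if_splits)
  then have "of_nat (sector_dim n (sec x)) = (\<Sum>z\<in>{z \<in> basis n. sec x = sec z}. (1::complex))"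
    unfolding sector_dim_def by simp
  also have "\<dots> = (\<Sum>z\<in>basis n. if sec x = sec z then 1 else 0)"
    by (subst sum.inter_filter[symmetric]) (simp_all add: finite_basis)
  also have "\<dots> = (\<Sum>z\<in>basis n. \<Prod>k<n. if (x!k < 2 \<longleftrightarrow> z!k < 2) then 1 else 0)"
  proof (rule sum.cong[OF refl])
    fix z assume z: "z \<in> basis n"
    have "sec x = sec z \<longleftrightarrow> (\<forall>k<n. (x!k < 2 \<longleftrightarrow> z!k < 2))"
      using basis_len[OF x] basis_len[OF z] by (auto simp: list_eq_iff_nth_eq sec_def)
    then show "(if sec x = sec z then 1 else 0) = (\<Prod>k<n. if (x!k < 2 \<longleftrightarrow> z!k < 2) then 1 else (0::complex))"
      by (simp add: prod_if0)
  qed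
  also have "\<dots> = (\<Prod>k<n. \<Sum>a\<in>{0,1,2::nat}. if (x!k < 2 \<longleftrightarrow> a < 2) then 1 else 0)"
    unfolding basis_def
    using sum_lists_prod[of "{0,1,2::nat}" "\<lambda>k a. if (x!k < 2 \<longleftrightarrow> a < 2) then 1 else (0::complex)" n]
    by simp
  also have "\<dots> = (\<Prod>k<n. if x!k < 2 then 2 else 1)"
    by (rule prod.cong) auto
  finally have "of_nat (sector_dim n (sec x)) = (\<Prod>k<n. if x!k < 2 then 2 else (1::complex))" .
  then show ?thesis by (simp add: prod.distrib[symmetric]) (intro prod.neutral ballI, simp)
qed

theorem lemma1:
  fixes n :: nat and \<rho> :: opn
  assumes "n \<ge> 1"
  shows "\<forall>x\<in>basis n. \<forall>y\<in>basis n.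
           (1 / of_nat (card (pauli_group_n n))) *
             (\<Sum>Ps\<in>pauli_group_n n. pauli_channel n Ps \<rho> x y)
           = twirl_proj n \<rho> x y"
proof (intro ballI)
  fix x y assume x: "x \<in> basis n" and y: "y \<in> basis n"
  define G where "G = (\<Prod>k<n. if x!k < 2 then 1/2 else (1::complex))"
  define T where "T = (\<Sum>z\<in>basis n. if sec x = sec z then \<rho> z z else 0)"
  have fpg: "finite pauli_group" by (simp add: pauli_group_def univ_pauli)
  have "(\<Sum>Ps\<in>pauli_group_n n. pauli_channel n Ps \<rho> x y)
    = (\<Sum>Ps\<in>pauli_group_n n. \<Sum>z\<in>basis n. \<Sum>w\<in>basis n. \<rho> z w *
     (\<Prod>k<n. lift (Ps!k) (x!k) (z!k) * cnj (lift (Ps!k) (y!k) (w!k))))"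
    by (rule sum.cong[OF refl]) (rule channel_expand)
  also have "\<dots> = (\<Sum>z\<in>basis n. \<Sum>w\<in>basis n. \<rho> z w * (\<Sum>Ps\<in>pauli_group_n n.
     (\<Prod>k<n. lift (Ps!k) (x!k) (z!k) * cnj (lift (Ps!k) (y!k) (w!k)))))"
    by (simp add: sum_distrib_left sum.swap[of _ "pauli_group_n n"])
  also have "\<dots> = (\<Sum>z\<in>basis n. \<Sum>w\<in>basis n. \<rho> z w *
     (\<Prod>k<n. \<Sum>P\<in>pauli_group. lift P (x!k) (z!k) * cnj (lift P (y!k) (w!k))))"
  proof (intro sum.cong refl arg_cong2[where f = "(*)"])
    fix z w
    show "(\<Sum>Ps\<in>pauli_group_n n.
     (\<Prod>k<n. lift (Ps!k) (x!k) (z!k) * cnj (lift (Ps!k) (y!k) (w!k)))) =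
     (\<Prod>k<n. \<Sum>P\<in>pauli_group. lift P (x!k) (z!k) * cnj (lift P (y!k) (w!k)))"
      unfolding pauli_group_n_def
      using sum_lists_prod[OF fpg, of "\<lambda>k P. lift P (x!k) (z!k) * cnj (lift P (y!k) (w!k))" n]
      by simp
  qed
  also have "\<dots> = (\<Sum>z\<in>basis n. \<Sum>w\<in>basis n. \<rho> z w * (16 ^ n * (\<Prod>k<n. sw (x!k) (z!k) (y!k) (w!k))))"
  proof (intro sum.cong refl arg_cong2[where f = "(*)"])
    fix z w assume z: "z \<in> basis n" and w: "w \<in> basis n"
    have "(\<Prod>k<n. \<Sum>P\<in>pauli_group. lift P (x!k) (z!k) * cnj (lift P (y!k) (w!k)))
       = (\<Prod>k<n. 16 * sw (x!k) (z!k) (y!k) (w!k))"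
      using basis_nth[OF x] basis_nth[OF y] basis_nth[OF z] basis_nth[OF w]
      by (intro prod.cong refl site) auto
    then show "(\<Prod>k<n. \<Sum>P\<in>pauli_group. lift P (x!k) (z!k) * cnj (lift P (y!k) (w!k)))
       = 16 ^ n * (\<Prod>k<n. sw (x!k) (z!k) (y!k) (w!k))"
      by (simp add: prod.distrib)
  qed
  also have "\<dots> = 16 ^ n * (\<Sum>z\<in>basis n. \<Sum>w\<in>basis n. \<rho> z w *
       (if x = y \<and> z = w \<and> sec x = sec z then G else 0))"
    unfolding G_def
    by (simp add: sum_distrib_left prod_sw[OF x y] mult_ac cong: sum.cong)
  also have "\<dots> = 16 ^ n * (if x = y then T * G else 0)"
  proof -
    have "(\<Sum>w\<in>basis n. \<rho> z w * (if x = y \<and> z = w \<and> sec x = sec z then G else 0))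
       = (if x = y \<and> sec x = sec z then \<rho> z z * G else 0)" if z: "z \<in> basis n" for z
    proof -
      have "(\<Sum>w\<in>basis n. \<rho> z w * (if x = y \<and> z = w \<and> sec x = sec z then G else 0))
        = (\<Sum>w\<in>basis n. if z = w then (if x = y \<and> sec x = sec z then \<rho> z z * G else 0) else 0)"
        by (rule sum.cong) auto
      also have "\<dots> = (if x = y \<and> sec x = sec z then \<rho> z z * G else 0)"
        using z finite_basis by (simp add: sum.delta)
      finally show ?thesis .
    qed
    then show ?thesis unfolding T_def
      by (simp add: sum_distrib_right cong: sum.cong if_cong) (auto intro!: sum.cong)
  qed
  finally have L: "(\<Sum>Ps\<in>pauli_group_n n. pauli_channel n Ps \<rho> x y) = 16 ^ n * (if x = y then T * G else 0)" .
  have R: "twirl_proj n \<rho> x y = (if x = y then T / of_nat (sector_dim n (sec x)) else 0)"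
  proof -
    have tr: "mtrace n (mmult n (sector_proj s) \<rho>) = (\<Sum>z\<in>basis n. if s = sec z then \<rho> z z else 0)"
      if s: "s \<in> sectors n" for s
      unfolding mtrace_def mmult_def
    proof (rule sum.cong[OF refl])
      fix z assume z: "z \<in> basis n"
      have "(\<Sum>u\<in>basis n. sector_proj s z u * \<rho> u z) = (\<Sum>u\<in>basis n. if z = u then (if s = sec z then \<rho> z z else 0) else 0)"
        using sp[OF s z] by (intro sum.cong refl) auto
      also have "\<dots> = (if s = sec z then \<rho> z z else 0)"
        using z finite_basis by (simp add: sum.delta)
      finally show "(\<Sum>u\<in>basis n. sector_proj s z u * \<rho> u z) = (if s = sec z then \<rho> z z else 0)" .
    qed
    define c where "c = (if x = y then T / of_nat (sector_dim n (sec x)) else 0)"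
    have "twirl_proj n \<rho> x y = (\<Sum>s\<in>sectors n. if s = sec x then c else 0)"
      unfolding twirl_proj_def normalized_sector_proj_def
    proof (rule sum.cong[OF refl])
      fix s assume s: "s \<in> sectors n"
      show "mtrace n (mmult n (sector_proj s) \<rho>) * (sector_proj s x y / of_nat (sector_dim n s)) =
         (if s = sec x then c else 0)"
        using sp[OF s x y] tr[OF s] unfolding T_def c_def by (auto simp: eq_commute)
    qed
    also have "\<dots> = c"
      using sec_sectors[OF x] finite_sectors by (simp add: sum.delta)
    also have "\<dots> = (if x = y then T / of_nat (sector_dim n (sec x)) else 0)" by (simp add: c_def)
    finally show ?thesis .
  qed
  have D: "of_nat (sector_dim n (sec x)) * G = 1" unfolding G_def by (rule dimG[OF x])
  then have "G = 1 / of_nat (sector_dim n (sec x))"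
    by (metis mult_zero_left nonzero_eq_divide_eq zero_neq_one mult.commute)
  then show "(1 / of_nat (card (pauli_group_n n))) *
             (\<Sum>Ps\<in>pauli_group_n n. pauli_channel n Ps \<rho> x y) = twirl_proj n \<rho> x y"
    unfolding L R card_pg by simp
qed

end
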